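(* Let $G$ be a group with identity $\mathbf{1}$, $S\subseteq G$ inverse-closed, and $X=\mathrm{Cay}(G;S)$. If the group $\mathcal{A}^0_{\mathbf{1}}(X)$ of colour-preserving automorphisms of $X$ fixing $\mathbf{1}$ is trivial (equivalently, every colour-preserving automorphism of $X$ is a left translation $x\mapsto gx$), then $X$ is strongly CCA.
   Context: Graphs are simple (possibly infinite). For an inverse-closed subset $S$ of a group $G$, $\mathrm{Cay}(G;S)$ has vertex set $G$ and an edge from $g$ to $gs$ for each $g\in G$, $s\in S$; the edge $g$—$gs$ is coloured $\{s,s^{-1}\}$. A graph automorphism is colour-preserving if it maps every edge to an edge of the same colour, and colour-permuting if whenever two edges have the same colour their images also have the same colour. A map $\varphi\colon G\to G$ is affine if $\varphi(x)=\alpha(gx)$ for some $\alpha\in\mathrm{Aut}(G)$, $g\in G$. $\mathrm{Cay}(G;S)$ is strongly CCA if every colour-permuting automorphism of it is affine. *)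

theory Defs
  imports "HOL-Algebra.Group" "HOL-Algebra.Coset"
begin

definition cay_adj :: "('a, 'b) monoid_scheme \<Rightarrow> 'a set \<Rightarrow> 'a \<Rightarrow> 'a \<Rightarrow> bool" where
  "cay_adj G S x y \<longleftrightarrow> x \<in> carrier G \<and> y \<in> carrier G \<and> x \<noteq> y \<and> inv\<^bsub>G\<^esub> x \<otimes>\<^bsub>G\<^esub> y \<in> S"

text \<open>Colour of the edge from x to y = x s: the set {s, s^-1}.\<close>
definition cay_colour :: "('a, 'b) monoid_scheme \<Rightarrow> 'a \<Rightarrow> 'a \<Rightarrow> 'a set" where
  "cay_colour G x y = {inv\<^bsub>G\<^esub> x \<otimes>\<^bsub>G\<^esub> y, inv\<^bsub>G\<^esub> y \<otimes>\<^bsub>G\<^esub> x}"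

definition cay_aut :: "('a, 'b) monoid_scheme \<Rightarrow> 'a set \<Rightarrow> ('a \<Rightarrow> 'a) \<Rightarrow> bool" where
  "cay_aut G S f \<longleftrightarrow> bij_betw f (carrier G) (carrier G) \<and>
     (\<forall>x\<in>carrier G. \<forall>y\<in>carrier G. cay_adj G S (f x) (f y) \<longleftrightarrow> cay_adj G S x y)"

definition colour_preserving :: "('a, 'b) monoid_scheme \<Rightarrow> 'a set \<Rightarrow> ('a \<Rightarrow> 'a) \<Rightarrow> bool" where
  "colour_preserving G S f \<longleftrightarrow> cay_aut G S f \<and>
     (\<forall>x y. cay_adj G S x y \<longrightarrow> cay_colour G (f x) (f y) = cay_colour G x y)"

definition colour_permuting :: "('a, 'b) monoid_scheme \<Rightarrow> 'a set \<Rightarrow> ('a \<Rightarrow> 'a) \<Rightarrow> bool" where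
  "colour_permuting G S f \<longleftrightarrow> cay_aut G S f \<and>
     (\<forall>x y u v. cay_adj G S x y \<longrightarrow> cay_adj G S u v \<longrightarrow>
        cay_colour G x y = cay_colour G u v \<longrightarrow>
        cay_colour G (f x) (f y) = cay_colour G (f u) (f v))"

definition affine_map :: "('a, 'b) monoid_scheme \<Rightarrow> ('a \<Rightarrow> 'a) \<Rightarrow> bool" where
  "affine_map G f \<longleftrightarrow> (\<exists>\<alpha> \<in> iso G G. \<exists>g\<in>carrier G.
      \<forall>x\<in>carrier G. f x = \<alpha> (g \<otimes>\<^bsub>G\<^esub> x))"

definition strongly_CCA :: "('a, 'b) monoid_scheme \<Rightarrow> 'a set \<Rightarrow> bool" where
  "strongly_CCA G S \<longleftrightarrow> (\<forall>f. colour_permuting G S f \<longrightarrow> affine_map G f)"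

end

theory Submission
  imports Defs
begin

context group
begin

lemma transl_aut:
  assumes g: "g \<in> carrier G"
  shows "cay_aut G S (\<lambda>x. g \<otimes> x)"
proof -
  have "bij_betw (\<lambda>x. g \<otimes> x) (carrier G) (carrier G)"
  proof (rule bij_betwI')
    show "\<And>x y. x \<in> carrier G \<Longrightarrow> y \<in> carrier G \<Longrightarrow> (g \<otimes> x = g \<otimes> y) = (x = y)"
      using g by simp
    show "\<And>x. x \<in> carrier G \<Longrightarrow> g \<otimes> x \<in> carrier G" using g by simp
    show "\<And>y. y \<in> carrier G \<Longrightarrow> \<exists>x\<in>carrier G. y = g \<otimes> x"
      using g by (metis inv_closed m_assoc m_closed r_inv l_one)
  qed
  moreover have "inv (g \<otimes> x) \<otimes> (g \<otimes> y) = inv x \<otimes> y"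
    if "x \<in> carrier G" "y \<in> carrier G" for x y
    using g that by (simp add: inv_mult_group m_assoc[symmetric]) (simp add: m_assoc)
  ultimately show ?thesis
    unfolding cay_aut_def cay_adj_def using g by auto
qed

lemma transl_colour:
  assumes "g \<in> carrier G" "x \<in> carrier G" "y \<in> carrier G"
  shows "cay_colour G (g \<otimes> x) (g \<otimes> y) = cay_colour G x y"
proof -
  have "inv (g \<otimes> x) \<otimes> (g \<otimes> y) = inv x \<otimes> y" "inv (g \<otimes> y) \<otimes> (g \<otimes> x) = inv y \<otimes> x"
    using assms by (simp_all add: inv_mult_group m_assoc[symmetric]) (simp_all add: m_assoc)
  then show ?thesis unfolding cay_colour_def by simp
qed

lemma comp_aut:
  assumes "cay_aut G S f" "cay_aut G S h"
  shows "cay_aut G S (f \<circ> h)"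
proof -
  have hc: "\<And>x. x \<in> carrier G \<Longrightarrow> h x \<in> carrier G"
    using assms(2) unfolding cay_aut_def bij_betw_def by auto
  show ?thesis using assms hc unfolding cay_aut_def
    by (auto intro: bij_betw_trans)
qed

lemma inv_aut:
  assumes "cay_aut G S f"
  shows "cay_aut G S (inv_into (carrier G) f)"
proof -
  have b: "bij_betw f (carrier G) (carrier G)" using assms unfolding cay_aut_def by auto
  have bi: "bij_betw (inv_into (carrier G) f) (carrier G) (carrier G)"
    using bij_betw_inv_into[OF b] .
  have ic: "\<And>x. x \<in> carrier G \<Longrightarrow> inv_into (carrier G) f x \<in> carrier G"
    using bi unfolding bij_betw_def by auto
  have fi: "\<And>x. x \<in> carrier G \<Longrightarrow> f (inv_into (carrier G) f x) = x"
    using b by (simp add: bij_betw_def f_inv_into_f)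
  show ?thesis unfolding cay_aut_def
  proof (intro conjI bi ballI)
    fix x y assume "x \<in> carrier G" "y \<in> carrier G"
    then show "cay_adj G S (inv_into (carrier G) f x) (inv_into (carrier G) f y) = cay_adj G S x y"
      using assms ic fi unfolding cay_aut_def by metis
  qed
qed

lemma adj_carrier: "cay_adj G S x y \<Longrightarrow> x \<in> carrier G \<and> y \<in> carrier G"
  unfolding cay_adj_def by auto

lemma perm_hom:
  assumes fp: "colour_permuting G S f" and f1: "f \<one> = \<one>"
    and triv: "\<forall>f. colour_preserving G S f \<and> f \<one> = \<one> \<longrightarrow> (\<forall>x\<in>carrier G. f x = x)"
    and g: "g \<in> carrier G" and y: "y \<in> carrier G"
  shows "f (g \<otimes> y) = f g \<otimes> f y"
proof -
  have fa: "cay_aut G S f" using fp unfolding colour_permuting_def by auto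
  have b: "bij_betw f (carrier G) (carrier G)" using fa unfolding cay_aut_def by auto
  have fc: "\<And>x. x \<in> carrier G \<Longrightarrow> f x \<in> carrier G" using b unfolding bij_betw_def by auto
  define fi where "fi = inv_into (carrier G) f"
  have fia: "cay_aut G S fi" unfolding fi_def using inv_aut[OF fa] .
  have fic: "\<And>x. x \<in> carrier G \<Longrightarrow> fi x \<in> carrier G"
    using fia unfolding cay_aut_def bij_betw_def by auto
  have ffi: "\<And>x. x \<in> carrier G \<Longrightarrow> f (fi x) = x"
    using b by (simp add: fi_def bij_betw_def f_inv_into_f)
  have fif: "\<And>x. x \<in> carrier G \<Longrightarrow> fi (f x) = x"
    using b by (simp add: fi_def bij_betw_def inv_into_f_f)
  define psi where "psi = (\<lambda>x. f (g \<otimes> fi x))"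
  have psic: "\<And>x. x \<in> carrier G \<Longrightarrow> psi x \<in> carrier G"
    unfolding psi_def using fc fic g by simp
  have psia: "cay_aut G S psi"
  proof -
    have "cay_aut G S (f \<circ> ((\<lambda>x. g \<otimes> x) \<circ> fi))"
      by (intro comp_aut fa fia transl_aut g)
    then show ?thesis unfolding psi_def by (simp add: o_def)
  qed
  define h where "h = psi \<one>"
  have hc: "h \<in> carrier G" unfolding h_def using psic by simp
  define chi where "chi = (\<lambda>x. inv h \<otimes> psi x)"
  have chia: "cay_aut G S chi"
  proof -
    have "cay_aut G S ((\<lambda>x. inv h \<otimes> x) \<circ> psi)"
      by (intro comp_aut psia transl_aut) (simp add: hc)
    then show ?thesis unfolding chi_def by (simp add: o_def)
  qed
  have psicol: "cay_colour G (psi x) (psi y) = cay_colour G x y" if adj: "cay_adj G S x y" for x y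
  proof -
    have xy: "x \<in> carrier G" "y \<in> carrier G" using adj_carrier[OF adj] by auto
    have a1: "cay_adj G S (fi x) (fi y)" using fia xy adj unfolding cay_aut_def by auto
    have a2: "cay_adj G S (g \<otimes> fi x) (g \<otimes> fi y)"
      using transl_aut[OF g, of S] a1 fic xy unfolding cay_aut_def by auto
    have c: "cay_colour G (g \<otimes> fi x) (g \<otimes> fi y) = cay_colour G (fi x) (fi y)"
      using transl_colour g fic xy by auto
    have "cay_colour G (f (g \<otimes> fi x)) (f (g \<otimes> fi y)) = cay_colour G (f (fi x)) (f (fi y))"
      using fp a1 a2 c unfolding colour_permuting_def by blast
    then show ?thesis unfolding psi_def using ffi xy by simp
  qed
  have chicp: "colour_preserving G S chi"
    unfolding colour_preserving_def
  proof (intro conjI chia allI impI)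
    fix x y assume adj: "cay_adj G S x y"
    have xy: "x \<in> carrier G" "y \<in> carrier G" using adj_carrier[OF adj] by auto
    show "cay_colour G (chi x) (chi y) = cay_colour G x y"
      unfolding chi_def using transl_colour[of "inv h" "psi x" "psi y"] hc psic xy psicol[OF adj]
      by simp
  qed
  have chi1: "chi \<one> = \<one>" unfolding chi_def h_def using psic by simp
  have "chi (f y) = f y" using triv chicp chi1 fc y by blast
  then have "inv h \<otimes> psi (f y) = f y" unfolding chi_def .
  then have e: "psi (f y) = h \<otimes> f y"
    using hc psic fc y by (metis inv_closed l_one m_assoc r_inv)
  have fi1: "fi \<one> = \<one>" using fif[of \<one>] f1 by simp
  have "h = f g" unfolding h_def psi_def fi1 using g by simp
  moreover have "psi (f y) = f (g \<otimes> y)" unfolding psi_def using fif y by simp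
  ultimately show ?thesis using e by simp
qed
lemma main_thm:
  assumes "\<forall>f. colour_preserving G S f \<and> f \<one> = \<one> \<longrightarrow> (\<forall>x\<in>carrier G. f x = x)"
  shows "strongly_CCA G S"
  unfolding strongly_CCA_def
proof (intro allI impI)
  fix f assume fp: "colour_permuting G S f"
  have fa: "cay_aut G S f" using fp unfolding colour_permuting_def by auto
  have fc: "\<And>x. x \<in> carrier G \<Longrightarrow> f x \<in> carrier G"
    using fa unfolding cay_aut_def bij_betw_def by auto
  define a where "a = f \<one>"
  have ac: "a \<in> carrier G" unfolding a_def using fc by simp
  define f0 where "f0 = (\<lambda>x. inv a \<otimes> f x)"
  have f0a: "cay_aut G S f0"
  proof -
    have "cay_aut G S ((\<lambda>x. inv a \<otimes> x) \<circ> f)"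
      by (intro comp_aut fa transl_aut) (simp add: ac)
    then show ?thesis unfolding f0_def by (simp add: o_def)
  qed
  have col: "cay_colour G (f0 x) (f0 y) = cay_colour G (f x) (f y)" if "cay_adj G S x y" for x y
    using adj_carrier[OF that] fc ac transl_colour[of "inv a" "f x" "f y"] unfolding f0_def by simp
  have f0p: "colour_permuting G S f0"
    unfolding colour_permuting_def
  proof (intro conjI f0a allI impI)
    fix x y u v assume "cay_adj G S x y" "cay_adj G S u v" "cay_colour G x y = cay_colour G u v"
    then show "cay_colour G (f0 x) (f0 y) = cay_colour G (f0 u) (f0 v)"
      using fp col unfolding colour_permuting_def by metis
  qed
  have f01: "f0 \<one> = \<one>" unfolding f0_def a_def using fc by simp
  have hom: "\<And>g y. g \<in> carrier G \<Longrightarrow> y \<in> carrier G \<Longrightarrow> f0 (g \<otimes> y) = f0 g \<otimes> f0 y"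
    using perm_hom[OF f0p f01 assms(1)] by blast
  have b0: "bij_betw f0 (carrier G) (carrier G)" using f0a unfolding cay_aut_def by auto
  have iso: "f0 \<in> iso G G"
    unfolding iso_def hom_def using b0 hom by (auto simp: bij_betw_def)
  define g where "g = inv_into (carrier G) f0 a"
  have gc: "g \<in> carrier G" unfolding g_def using b0 ac
    by (metis bij_betw_def inv_into_into)
  have f0g: "f0 g = a" unfolding g_def using b0 ac by (simp add: bij_betw_def f_inv_into_f)
  have "\<forall>x\<in>carrier G. f x = f0 (g \<otimes> x)"
  proof
    fix x assume x: "x \<in> carrier G"
    have "f0 (g \<otimes> x) = a \<otimes> (inv a \<otimes> f x)" using hom[OF gc x] f0g unfolding f0_def by simp
    also have "\<dots> = f x" using ac fc x by (simp add: m_assoc[symmetric])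
    finally show "f x = f0 (g \<otimes> x)" by simp
  qed
  then show "affine_map G f" unfolding affine_map_def using iso gc by blast
qed

end

theorem corollary4p7:
  fixes G :: "('a, 'b) monoid_scheme" and S :: "'a set"
  assumes "group G"
    and "S \<subseteq> carrier G"
    and "\<forall>s\<in>S. inv\<^bsub>G\<^esub> s \<in> S"
    and "\<forall>f. colour_preserving G S f \<and> f \<one>\<^bsub>G\<^esub> = \<one>\<^bsub>G\<^esub> \<longrightarrow>
                (\<forall>x\<in>carrier G. f x = x)"
  shows "strongly_CCA G S"
  using group.main_thm[OF assms(1) assms(4)] .

end
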